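(* Let $R$ be an Artinian ring, with notation as in the context. Let $h_1\colon R^m\to R^n$ and $h_2\colon R^n\to R^\ell$ be column-adapted $R$-linear maps. Then $h_2\circ h_1\colon R^m\to R^\ell$ is column-adapted.
   Context: Let $R$ be an Artinian ring, $J(R)$ its Jacobson radical, $\overline R=R/J(R)$, and $\bar x$ (resp. $\bar A$) the image of an element (resp. entrywise image of a matrix). $\overline R$ is semisimple, $\overline R\cong \mathrm{Mat}_{\mu_1}(\mathbb D_1)\times\cdots\times\mathrm{Mat}_{\mu_q}(\mathbb D_q)$ with division rings $\mathbb D_k$; put $\mu=\mu_1+\cdots+\mu_q$. Fix orthogonal idempotents $e^k_i\in R$ ($1\le k\le q$, $1\le i\le\mu_k$) with $\sum_{k,i}e^k_i=1$ lifting the orthogonal idempotents $\bar e^k_i$ of $\overline R$ given by the diagonal matrix units of this decomposition (so $e^k_iR\cong e^{k'}_{i'}R$ iff $k=k'$). Let $\mathbb L_{hk}=e^h_1Re^k_1$; then $\overline{\mathbb L_{kk}}=\mathbb D_k$ and $\overline{\mathbb L_{hk}}=0$ for $h\ne k$. The Peirce decomposition $R\cong\mathrm{End}(R_R)=\bigoplus\mathrm{Hom}(e^k_jR,e^h_iR)$, with the isomorphisms $e^h_iR\cong e^h_1R$, gives an injective ring homomorphism (the Artin–Wedderburn embedding) $\Phi\colon R\to\mathrm{Mat}_\mu(R)$, $x\mapsto(\Phi_{hk}(x))_{h,k=1}^q$ a $q\times q$ block matrix with $\Phi_{hk}(x)\in\mathrm{Mat}_{\mu_h,\mu_k}(\mathbb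 L_{hk})$; its reduction $\overline\Phi\colon\overline R\to\mathrm{Mat}_\mu(\overline R)$ sends $\bar x$ to the block-diagonal matrix whose $k$-th block is the $\mathrm{Mat}_{\mu_k}(\mathbb D_k)$-component of $\bar x$. Vectors $R^n$ are columns (right $R$-modules); an $R$-linear $h\colon R^m\to R^n$ is an $n\times m$ matrix, and $\Phi(h)\in\mathrm{Mat}_{\mu n,\mu m}(R)$ is obtained by replacing each entry $x$ by $\Phi(x)$; similarly $\overline\Phi(\bar h)$. Distinguished basis: for $1\le k\le q$, $1\le a\le m$, $1\le r\le\mu_k$, let $\vec v(k)_{(a-1)\mu_k+r}$ be the standard basis vector of $R^{\mu m}$ of index $(a-1)\mu+\mu_1+\cdots+\mu_{k-1}+r$; define $\vec w(k)_i$ ($1\le i\le\mu_kn$) in $R^{\mu n}$ in the same way, bars denoting images in $\overline R^{\mu m},\overline R^{\mu n}$. Then $\overline\Phi(\bar h)(\overline{\vec v(k)_j})\in\bigoplus_{i=1}^{\mu_kn}\overline{\vec w(k)_i}\cdot\mathbb D_k$. For surjective $h$ and each $k$, $\mathfrak S(h,k)$ is the smallest, in the lexicographic order on increasingly sorted sequences, subset $S\subset\{1,\dots,\mu_km\}$ such that $\{\overline\Phi(\bar h)(\overline{\vec v(k)_j}):j\in S\}$ is a basis of the right $\mathbb D_k$-module $\bigoplus_{i=1}^{\mu_kn}\overline{\vec w(k)_i}\cdot\mathbb D_k$ (it has $\mu_kn$ elements). A surjective $R$-linear $h\colon R^m\to R^n$ is column-adapted if (i) for every $k$, writing $\mathfrak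 S(h,k)=\{j_1<\cdots<j_{\mu_kn}\}$, $\overline\Phi(\bar h)(\overline{\vec v(k)_{j_i}})=\overline{\vec w(k)_i}$ for all $i$, and (ii) $\Phi(h)(\vec v(k)_{j_i})=\vec w(k)_i$ for all $k$ and $1\le i\le\mu_kn$. *)

theory Defs
  imports Main
begin

(* All indices are 0-based: blocks k < q, positions i < mu k inside block k.
   The paper's e^k_i (1-based) is  e k (i-1);  e^k_1 is  e k 0. *)

definition right_ideal :: "'a::ring_1 set \<Rightarrow> bool" where
  "right_ideal I \<longleftrightarrow> 0 \<in> I \<and> (\<forall>x\<in>I. \<forall>y\<in>I. x + y \<in> I) \<and> (\<forall>x\<in>I. - x \<in> I)
     \<and> (\<forall>x\<in>I. \<forall>r. x * r \<in> I)"

definition right_artinian :: "'a::ring_1 itself \<Rightarrow> bool" where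
  "right_artinian _ \<longleftrightarrow>
     \<not> (\<exists>f :: nat \<Rightarrow> 'a set. (\<forall>i. right_ideal (f i)) \<and> (\<forall>i. f (Suc i) \<subset> f i))"

definition maximal_right_ideal :: "'a::ring_1 set \<Rightarrow> bool" where
  "maximal_right_ideal M \<longleftrightarrow> right_ideal M \<and> M \<noteq> UNIV \<and>
     (\<forall>I. right_ideal I \<and> M \<subseteq> I \<longrightarrow> I = M \<or> I = UNIV)"

text \<open>Jacobson radical: intersection of all maximal right ideals.
  Elements of R/J(R) are represented by elements of R; x-bar = y-bar iff x - y : J.\<close>
definition jacobson_radical :: "'a::ring_1 set" where
  "jacobson_radical = \<Inter> {M. maximal_right_ideal M}"

definition blk_off :: "(nat \<Rightarrow> nat) \<Rightarrow> nat \<Rightarrow> nat" where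
  "blk_off mu k = (\<Sum>k'<k. mu k')"

definition mu_total :: "nat \<Rightarrow> (nat \<Rightarrow> nat) \<Rightarrow> nat" where
  "mu_total q mu = (\<Sum>k<q. mu k)"

text \<open>Standing assumptions:
  e k i (k<q, i<mu k) orthogonal idempotents of R summing to 1, lifting the diagonal
  matrix units eps k i i of a decomposition R/J = prod_k Mat_{mu k}(D_k), D_k division rings
  (given by a full system of matrix units eps of R/J with division-ring corners
  D_k = eps k 0 0 (R/J) eps k 0 0);
  u h i : e^h_i R -> e^h_1 R and v h i its inverse, i.e. chosen isomorphisms
  e^h_i R ~ e^h_1 R given by left multiplication by u h i in e^h_1 R e^h_i, v h i in e^h_i R e^h_1.\<close>
definition AW_setup ::
  "nat \<Rightarrow> (nat \<Rightarrow> nat) \<Rightarrow> (nat \<Rightarrow> nat \<Rightarrow> 'a::ring_1) \<Rightarrow> (nat \<Rightarrow> nat \<Rightarrow> 'a) \<Rightarrow> (nat \<Rightarrow> nat \<Rightarrow> 'a) \<Rightarrow> bool"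
where
  "AW_setup q mu e u v \<longleftrightarrow>
    (\<forall>k<q. 0 < mu k) \<and>
    (\<forall>k<q. \<forall>i<mu k. e k i * e k i = e k i) \<and>
    (\<forall>k<q. \<forall>i<mu k. \<forall>k'<q. \<forall>i'<mu k'. (k, i) \<noteq> (k', i') \<longrightarrow> e k i * e k' i' = 0) \<and>
    (\<Sum>k<q. \<Sum>i<mu k. e k i) = 1 \<and>
    (\<exists>eps :: nat \<Rightarrow> nat \<Rightarrow> nat \<Rightarrow> 'a.
       (\<forall>k<q. \<forall>i<mu k. \<forall>j<mu k. \<forall>k'<q. \<forall>i'<mu k'. \<forall>j'<mu k'.
          eps k i j * eps k' i' j' - (if k = k' \<and> j = i' then eps k i j' else 0) \<in> jacobson_radical) \<and>
       (\<forall>k<q. \<forall>i<mu k. eps k i i - e k i \<in> jacobson_radical) \<and>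
       (\<forall>k<q. eps k 0 0 \<notin> jacobson_radical \<and>
          (\<forall>x. eps k 0 0 * x * eps k 0 0 \<notin> jacobson_radical \<longrightarrow>
             (\<exists>y. eps k 0 0 * x * eps k 0 0 * (eps k 0 0 * y * eps k 0 0) - eps k 0 0 \<in> jacobson_radical \<and>
                  eps k 0 0 * y * eps k 0 0 * (eps k 0 0 * x * eps k 0 0) - eps k 0 0 \<in> jacobson_radical)))) \<and>
    (\<forall>h<q. \<forall>i<mu h.
       u h i = e h 0 * u h i * e h i \<and> v h i = e h i * v h i * e h 0 \<and>
       u h i * v h i = e h 0 \<and> v h i * u h i = e h i)"

text \<open>The Artin--Wedderburn embedding Phi : R -> Mat_mu(R); entry at (off h + i, off k + j)
  is u h i * x * v k j, an element of L_{hk} = e^h_1 R e^k_1.\<close>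
definition AW_phi ::
  "nat \<Rightarrow> (nat \<Rightarrow> nat) \<Rightarrow> (nat \<Rightarrow> nat \<Rightarrow> 'a::ring_1) \<Rightarrow> (nat \<Rightarrow> nat \<Rightarrow> 'a) \<Rightarrow> 'a \<Rightarrow> nat \<Rightarrow> nat \<Rightarrow> 'a"
where
  "AW_phi q mu u v x a b =
     (\<Sum>h<q. \<Sum>i<mu h. \<Sum>k<q. \<Sum>j<mu k.
        if a = blk_off mu h + i \<and> b = blk_off mu k + j then u h i * x * v k j else 0)"

text \<open>Phi applied entrywise to a matrix H (rows alpha, columns beta): a (mu n) x (mu m) matrix.\<close>
definition AW_phi_mat ::
  "nat \<Rightarrow> (nat \<Rightarrow> nat) \<Rightarrow> (nat \<Rightarrow> nat \<Rightarrow> 'a::ring_1) \<Rightarrow> (nat \<Rightarrow> nat \<Rightarrow> 'a) \<Rightarrow>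
   (nat \<Rightarrow> nat \<Rightarrow> 'a) \<Rightarrow> nat \<Rightarrow> nat \<Rightarrow> 'a"
where
  "AW_phi_mat q mu u v H p s =
     AW_phi q mu u v (H (p div mu_total q mu) (s div mu_total q mu))
       (p mod mu_total q mu) (s mod mu_total q mu)"

text \<open>Distinguished basis: (0-based) j-th vector of block k, j < mu k * m,
  is the standard basis vector of index (j div mu k) * mu + off k + (j mod mu k).\<close>
definition dist_idx :: "nat \<Rightarrow> (nat \<Rightarrow> nat) \<Rightarrow> nat \<Rightarrow> nat \<Rightarrow> nat" where
  "dist_idx q mu k j = (j div mu k) * mu_total q mu + blk_off mu k + j mod mu k"

text \<open>An R-linear map R^m -> R^n as an n x m matrix; surjectivity.\<close>
definition lin_surj :: "nat \<Rightarrow> nat \<Rightarrow> (nat \<Rightarrow> nat \<Rightarrow> 'a::ring_1) \<Rightarrow> bool" where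
  "lin_surj m n H \<longleftrightarrow> (\<forall>y :: nat \<Rightarrow> 'a. \<exists>x. \<forall>a<n. (\<Sum>b<m. H a b * x b) = y a)"

text \<open>Composition H2 o H1 of H1 : R^m -> R^n and H2 : R^n -> R^l (matrix product).\<close>
definition mat_comp :: "nat \<Rightarrow> (nat \<Rightarrow> nat \<Rightarrow> 'a::ring_1) \<Rightarrow> (nat \<Rightarrow> nat \<Rightarrow> 'a) \<Rightarrow> nat \<Rightarrow> nat \<Rightarrow> 'a" where
  "mat_comp n H2 H1 = (\<lambda>c b. \<Sum>a<n. H2 c a * H1 a b)"

text \<open>The corner L_kk = e^k_1 R e^k_1; D_k is its image in R/J.\<close>
definition corner :: "(nat \<Rightarrow> nat \<Rightarrow> 'a::ring_1) \<Rightarrow> nat \<Rightarrow> 'a set" where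
  "corner e k = {e k 0 * x * e k 0 | x. True}"

text \<open>{Phi-bar(H-bar)(v-bar(k)_j) : j in S} is a basis (as an indexed family) of the right
  D_k-module (+)_{i} w-bar(k)_i D_k inside (R/J)^{mu n}.\<close>
definition is_basis_set ::
  "nat \<Rightarrow> (nat \<Rightarrow> nat) \<Rightarrow> (nat \<Rightarrow> nat \<Rightarrow> 'a::ring_1) \<Rightarrow> (nat \<Rightarrow> nat \<Rightarrow> 'a) \<Rightarrow> (nat \<Rightarrow> nat \<Rightarrow> 'a) \<Rightarrow>
   nat \<Rightarrow> nat \<Rightarrow> (nat \<Rightarrow> nat \<Rightarrow> 'a) \<Rightarrow> nat \<Rightarrow> nat set \<Rightarrow> bool"
where
  "is_basis_set q mu e u v m n H k S \<longleftrightarrow>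
     S \<subseteq> {..<mu k * m} \<and>
     (\<forall>c. (\<forall>j\<in>S. c j \<in> corner e k) \<and>
          (\<forall>p<mu_total q mu * n.
             (\<Sum>j\<in>S. AW_phi_mat q mu u v H p (dist_idx q mu k j) * c j) \<in> jacobson_radical)
        \<longrightarrow> (\<forall>j\<in>S. c j \<in> jacobson_radical)) \<and>
     (\<forall>d. (\<forall>i<mu k * n. d i \<in> corner e k) \<longrightarrow>
        (\<exists>c. (\<forall>j\<in>S. c j \<in> corner e k) \<and>
          (\<forall>p<mu_total q mu * n.
             (\<Sum>j\<in>S. AW_phi_mat q mu u v H p (dist_idx q mu k j) * c j)
             - (\<Sum>i<mu k * n. if p = dist_idx q mu k i then d i else 0) \<in> jacobson_radical)))"

definition frakS ::
  "nat \<Rightarrow> (nat \<Rightarrow> nat) \<Rightarrow> (nat \<Rightarrow> nat \<Rightarrow> 'a::ring_1) \<Rightarrow> (nat \<Rightarrow> nat \<Rightarrow> 'a) \<Rightarrow> (nat \<Rightarrow> nat \<Rightarrow> 'a) \<Rightarrow>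
   nat \<Rightarrow> nat \<Rightarrow> (nat \<Rightarrow> nat \<Rightarrow> 'a) \<Rightarrow> nat \<Rightarrow> nat set \<Rightarrow> bool"
where
  "frakS q mu e u v m n H k S \<longleftrightarrow>
     is_basis_set q mu e u v m n H k S \<and>
     (\<forall>S'. is_basis_set q mu e u v m n H k S' \<longrightarrow>
        S = S' \<or> (sorted_list_of_set S, sorted_list_of_set S') \<in> lexord {(a, b). a < b})"

text \<open>Column-adapted. The basis vector w(k)_i is the standard basis vector whose nonzero
  entry is the identity e^k_1 of L_kk (resp. of D_k after reduction).\<close>
definition column_adapted ::
  "nat \<Rightarrow> (nat \<Rightarrow> nat) \<Rightarrow> (nat \<Rightarrow> nat \<Rightarrow> 'a::ring_1) \<Rightarrow> (nat \<Rightarrow> nat \<Rightarrow> 'a) \<Rightarrow> (nat \<Rightarrow> nat \<Rightarrow> 'a) \<Rightarrow>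
   nat \<Rightarrow> nat \<Rightarrow> (nat \<Rightarrow> nat \<Rightarrow> 'a) \<Rightarrow> bool"
where
  "column_adapted q mu e u v m n H \<longleftrightarrow>
     lin_surj m n H \<and>
     (\<forall>k<q. \<exists>S. frakS q mu e u v m n H k S \<and>
        (let js = sorted_list_of_set S in
          (\<forall>i<mu k * n. \<forall>p<mu_total q mu * n.
             AW_phi_mat q mu u v H p (dist_idx q mu k (js ! i))
             - (if p = dist_idx q mu k i then e k 0 else 0) \<in> jacobson_radical) \<and>
          (\<forall>i<mu k * n. \<forall>p<mu_total q mu * n.
             AW_phi_mat q mu u v H p (dist_idx q mu k (js ! i))
             = (if p = dist_idx q mu k i then e k 0 else 0))))"

end

theory Submission
  imports Defs
begin

abbreviation JJ :: "'a::ring_1 set" where "JJ \<equiv> jacobson_radical"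

lemma J_iff: "x \<in> JJ \<longleftrightarrow> (\<forall>M. maximal_right_ideal M \<longrightarrow> x \<in> M)"
  by (auto simp: jacobson_radical_def)

lemma J_0: "0 \<in> JJ"
  by (auto simp: J_iff maximal_right_ideal_def right_ideal_def)

lemma J_add: "x \<in> JJ \<Longrightarrow> y \<in> JJ \<Longrightarrow> x + y \<in> JJ"
  by (auto simp: J_iff maximal_right_ideal_def right_ideal_def)

lemma J_uminus: "x \<in> JJ \<Longrightarrow> - x \<in> JJ"
  by (auto simp: J_iff maximal_right_ideal_def right_ideal_def)

lemma J_uminus_iff: "- x \<in> JJ \<longleftrightarrow> x \<in> JJ"
  using J_uminus[of x] J_uminus[of "-x"] by auto

lemma J_diff: "x \<in> JJ \<Longrightarrow> y \<in> JJ \<Longrightarrow> x - y \<in> JJ"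
  using J_add[of x "-y"] J_uminus[of y] by simp

lemma J_mult_right: "x \<in> JJ \<Longrightarrow> x * r \<in> JJ"
  by (auto simp: J_iff maximal_right_ideal_def right_ideal_def)

lemma J_sum: "(\<And>i. i \<in> A \<Longrightarrow> f i \<in> JJ) \<Longrightarrow> sum f A \<in> JJ"
proof (induct A rule: infinite_finite_induct)
  case (infinite A) then show ?case by (simp add: J_0)
next
  case empty then show ?case by (simp add: J_0)
next
  case (insert x F) then show ?case by (simp add: J_add)
qed

lemma colon_max:
  fixes a :: "'a::ring_1"
  assumes M: "maximal_right_ideal M" and nU: "{r. a * r \<in> M} \<noteq> UNIV"
  shows "maximal_right_ideal {r. a * r \<in> M}"
proof -
  have RM: "right_ideal M" using M by (simp add: maximal_right_ideal_def)
  let ?C = "{r. a * r \<in> M}"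
  have RC: "right_ideal ?C"
    using RM by (auto simp: right_ideal_def distrib_left mult.assoc[symmetric])
  have "I = ?C \<or> I = UNIV" if I: "right_ideal I" "?C \<subseteq> I" for I
  proof (cases "I \<subseteq> ?C")
    case True then show ?thesis using I by auto
  next
    case False
    then obtain r0 where r0: "r0 \<in> I" "a * r0 \<notin> M" by auto
    let ?K = "{m + a * r0 * s | m s. m \<in> M}"
    have Kmem: "m + a * r0 * s \<in> ?K" if "m \<in> M" for m s using that by blast
    have RK: "right_ideal ?K"
      unfolding right_ideal_def
    proof (intro conjI ballI allI)
      show "0 \<in> ?K" using RM Kmem[of 0 0] by (auto simp: right_ideal_def)
    next
      fix x y assume "x \<in> ?K" "y \<in> ?K"
      then obtain m1 s1 m2 s2 where "x = m1 + a*r0*s1" "y = m2 + a*r0*s2" "m1 \<in> M" "m2 \<in> M" by auto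
      moreover have eq: "x + y = (m1 + m2) + a*r0*(s1+s2)" using calculation by (simp add: algebra_simps)
      moreover have "m1 + m2 \<in> M" using RM calculation by (auto simp: right_ideal_def)
      ultimately show "x + y \<in> ?K" by (subst eq) (rule Kmem)
    next
      fix x assume "x \<in> ?K"
      then obtain m1 s1 where "x = m1 + a*r0*s1" "m1 \<in> M" by auto
      moreover have eq: "- x = (- m1) + a*r0*(-s1)" using calculation by (simp add: algebra_simps)
      moreover have "- m1 \<in> M" using RM calculation by (auto simp: right_ideal_def)
      ultimately show "- x \<in> ?K" by (subst eq) (rule Kmem)
    next
      fix x r assume "x \<in> ?K"
      then obtain m1 s1 where "x = m1 + a*r0*s1" "m1 \<in> M" by auto
      moreover have eq: "x * r = (m1 * r) + a*r0*(s1*r)" using calculation by (simp add: algebra_simps)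
      moreover have "m1 * r \<in> M" using RM calculation by (auto simp: right_ideal_def)
      ultimately show "x * r \<in> ?K" by (subst eq) (rule Kmem)
    qed
    have MK: "M \<subseteq> ?K" using Kmem[of _ 0] by auto
    have "a * r0 \<in> ?K" using RM Kmem[of 0 1] by (auto simp: right_ideal_def)
    then have "?K \<noteq> M" using r0 by auto
    moreover have "?K = M \<or> ?K = UNIV" using M RK MK unfolding maximal_right_ideal_def by blast
    ultimately have "?K = UNIV" by blast
    then have "1 \<in> ?K" by simp
    then obtain m s where ms: "1 = m + a * r0 * s" "m \<in> M" by blast
    have "r \<in> I" for r
    proof -
      have "a * (r - r0 * s * (a * r)) = (1 - a * r0 * s) * (a * r)" by (simp add: algebra_simps)
      also have "1 - a * r0 * s = m" using ms(1) by (simp add: algebra_simps)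
      finally have eq: "a * (r - r0 * s * (a * r)) = m * (a * r)" .
      have "m * (a * r) \<in> M" using RM ms(2) by (simp add: right_ideal_def)
      then have "r - r0 * s * (a * r) \<in> I" using I eq by auto
      moreover have "r0 * s * (a * r) \<in> I" using I(1) r0(1) by (simp add: right_ideal_def mult.assoc)
      ultimately have "(r - r0 * s * (a * r)) + r0 * s * (a * r) \<in> I" using I(1) unfolding right_ideal_def by blast
      then show ?thesis by simp
    qed
    then show ?thesis by auto
  qed
  then show ?thesis using RC nU by (auto simp: maximal_right_ideal_def)
qed

lemma J_mult_left: "x \<in> JJ \<Longrightarrow> r * x \<in> JJ"
proof -
  assume x: "x \<in> JJ"
  show ?thesis unfolding J_iff
  proof (intro allI impI)
    fix M :: "'a set" assume M: "maximal_right_ideal M"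
    show "r * x \<in> M"
    proof (cases "{y. r * y \<in> M} = UNIV")
      case True then show ?thesis by auto
    next
      case False
      then have "maximal_right_ideal {y. r * y \<in> M}" using colon_max M by blast
      then show ?thesis using x by (auto simp: J_iff)
    qed
  qed
qed

lemma J_cong_trans: "a - b \<in> JJ \<Longrightarrow> b - c \<in> JJ \<Longrightarrow> a - c \<in> JJ"
  using J_add[of "a-b" "b-c"] by simp

lemma J_cong_sym: "a - b \<in> JJ \<Longrightarrow> b - a \<in> JJ"
  using J_uminus[of "a-b"] by simp

lemma J_cong_mult: "a - a' \<in> JJ \<Longrightarrow> b - b' \<in> JJ \<Longrightarrow> a * b - a' * b' \<in> JJ"
proof -
  assume "a - a' \<in> JJ" "b - b' \<in> JJ"
  then have "(a - a') * b + a' * (b - b') \<in> JJ" by (intro J_add J_mult_right J_mult_left)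
  then show ?thesis by (simp add: algebra_simps)
qed

lemma J_cong_in: "a - b \<in> JJ \<Longrightarrow> b \<in> JJ \<Longrightarrow> a \<in> JJ"
  using J_add[of "a-b" b] by simp

definition Cor :: "'a::ring_1 \<Rightarrow> 'a set" where
  "Cor E = {E * x * E | x. True}"

lemma corner_Cor: "corner e k = Cor (e k 0)"
  by (simp add: corner_def Cor_def)

lemma Cor_iff: "E * E = E \<Longrightarrow> x \<in> Cor E \<longleftrightarrow> E * x = x \<and> x * E = x"
  unfolding Cor_def
proof safe
  fix y assume "E * E = E"
  then show "E * (E * y * E) = E * y * E" "E * y * E * E = E * y * E"
    by (simp_all add: mult.assoc[symmetric]) (simp add: mult.assoc)
next
  assume "E * x = x" "x * E = x"
  then show "\<exists>y. x = E * y * E \<and> True" by (intro exI[of _ x]) simp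
qed


abbreviation lexn :: "nat list \<Rightarrow> nat list \<Rightarrow> bool" where "lexn \<equiv> ord_class.lexordp"

lemma sls_eq: "sorted_wrt (<) (l::nat list) \<Longrightarrow> sorted_list_of_set (set l) = l"
  by (simp add: sorted_list_of_set_sort_remdups strict_sorted_iff distinct_remdups_id sorted_sort_id)

lemma sls_props: "finite (X::nat set) \<Longrightarrow> sorted_wrt (<) (sorted_list_of_set X) \<and> set (sorted_list_of_set X) = X"
  by simp

lemma sorted_split:
  assumes "finite (X::nat set)"
  shows "sorted_list_of_set X = sorted_list_of_set (X \<inter> {..<j}) @ sorted_list_of_set (X \<inter> {j..})"
proof -
  let ?l = "sorted_list_of_set (X \<inter> {..<j}) @ sorted_list_of_set (X \<inter> {j..})"
  have "sorted_wrt (<) ?l" using assms by (auto simp: sorted_wrt_append)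
  moreover have "set ?l = X" using assms by auto
  ultimately show ?thesis using sls_eq by metis
qed

lemma lex_L1:
  fixes A B :: "nat set"
  assumes fA: "finite A" and fB: "finite B" and jA: "j \<in> A" and jB: "j \<notin> B"
    and eq: "A \<inter> {..<j} = B \<inter> {..<j}" and bB: "b \<in> B" and jb: "j < b"
  shows "lexn (sorted_list_of_set A) (sorted_list_of_set B)"
proof -
  have A1: "A \<inter> {j..} \<noteq> {}" using jA by auto
  have B1: "B \<inter> {j..} \<noteq> {}" using bB jb by auto
  have minA: "Min (A \<inter> {j..}) = j" using jA fA by (intro Min_eqI) auto
  have minB: "Min (B \<inter> {j..}) \<in> B \<inter> {j..}" using B1 fB by (intro Min_in) auto
  then have jminB: "j < Min (B \<inter> {j..})" using jB by (cases "Min (B \<inter> {j..}) = j") auto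
  have "sorted_list_of_set A = sorted_list_of_set (A \<inter> {..<j}) @ j # sorted_list_of_set ((A \<inter> {j..}) - {j})"
    using sorted_split[OF fA, of j] sorted_list_of_set_nonempty[OF _ A1] fA minA by simp
  moreover have "sorted_list_of_set B = sorted_list_of_set (A \<inter> {..<j}) @ Min (B \<inter> {j..}) # sorted_list_of_set ((B \<inter> {j..}) - {Min (B \<inter> {j..})})"
    using sorted_split[OF fB, of j] sorted_list_of_set_nonempty[OF _ B1] fB eq by simp
  ultimately show ?thesis using jminB by (simp add: lexordp_append_left_rightI)
qed

lemma lexordp_nat_irrefl: "\<not> lexn xs xs"
  by (rule lexordp_irreflexive') 

definition unitv :: "(nat \<Rightarrow> nat) \<Rightarrow> 'a::ring_1 \<Rightarrow> nat \<Rightarrow> nat \<Rightarrow> 'a" where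
  "unitv di E i p = (if p = di i then E else 0)"

definition bset :: "(nat \<Rightarrow> nat \<Rightarrow> 'a::ring_1) \<Rightarrow> nat \<Rightarrow> nat \<Rightarrow> nat \<Rightarrow> (nat \<Rightarrow> nat) \<Rightarrow> 'a \<Rightarrow> nat set \<Rightarrow> bool" where
  "bset col P R N di E S \<longleftrightarrow>
     S \<subseteq> {..<P} \<and>
     (\<forall>c. (\<forall>j\<in>S. c j \<in> Cor E) \<and> (\<forall>p<R. (\<Sum>j\<in>S. col j p * c j) \<in> JJ) \<longrightarrow> (\<forall>j\<in>S. c j \<in> JJ)) \<and>
     (\<forall>d. (\<forall>i<N. d i \<in> Cor E) \<longrightarrow>
        (\<exists>c. (\<forall>j\<in>S. c j \<in> Cor E) \<and>
          (\<forall>p<R. (\<Sum>j\<in>S. col j p * c j) - (\<Sum>i<N. if p = di i then d i else 0) \<in> JJ)))"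

definition genfrak :: "(nat \<Rightarrow> nat \<Rightarrow> 'a::ring_1) \<Rightarrow> nat \<Rightarrow> nat \<Rightarrow> nat \<Rightarrow> (nat \<Rightarrow> nat) \<Rightarrow> 'a \<Rightarrow> nat set \<Rightarrow> bool" where
  "genfrak col P R N di E S \<longleftrightarrow> bset col P R N di E S \<and>
     (\<forall>S'. bset col P R N di E S' \<longrightarrow> S = S' \<or> lexn (sorted_list_of_set S) (sorted_list_of_set S'))"

locale gen =
  fixes col :: "nat \<Rightarrow> nat \<Rightarrow> 'a::ring_1" and P R N :: nat and di :: "nat \<Rightarrow> nat" and E :: 'a
  assumes E_idem: "E * E = E" and E_notJ: "E \<notin> JJ"
    and di_inj: "inj_on di {..<N}" and di_lt: "\<And>i. i < N \<Longrightarrow> di i < R"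
    and col_right: "\<And>j p. col j p * E = col j p"
    and col_left: "\<And>j i. i < N \<Longrightarrow> E * col j (di i) = col j (di i)"
    and inv: "\<And>y. y \<in> Cor E \<Longrightarrow> y \<notin> JJ \<Longrightarrow> \<exists>y'\<in>Cor E. y * y' - E \<in> JJ \<and> y' * y - E \<in> JJ"
begin

abbreviation "U \<equiv> unitv di E"
abbreviation "BS \<equiv> bset col P R N di E"
abbreviation "FR \<equiv> genfrak col P R N di E"

lemma Cor_mem: "x \<in> Cor E \<longleftrightarrow> E * x = x \<and> x * E = x"
  using Cor_iff[OF E_idem] .

lemma Cor_E: "E \<in> Cor E" using E_idem by (simp add: Cor_mem)
lemma Cor_0: "0 \<in> Cor E" by (simp add: Cor_mem)
lemma Cor_mult: "x \<in> Cor E \<Longrightarrow> y \<in> Cor E \<Longrightarrow> x * y \<in> Cor E"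
  by (simp add: Cor_mem) (metis mult.assoc)
lemma Cor_diff: "x \<in> Cor E \<Longrightarrow> y \<in> Cor E \<Longrightarrow> x - y \<in> Cor E"
  by (simp add: Cor_mem algebra_simps)
lemma Cor_uminus: "x \<in> Cor E \<Longrightarrow> - x \<in> Cor E"
  by (simp add: Cor_mem)
lemma Cor_col: "i < N \<Longrightarrow> col j (di i) \<in> Cor E"
  by (simp add: Cor_mem col_left col_right)

lemma cancel:
  assumes yE: "y * E = y" and yJ: "y \<notin> JJ" and c: "c \<in> Cor E" and yc: "y * c \<in> JJ"
  shows "c \<in> JJ"
proof (rule ccontr)
  assume "c \<notin> JJ"
  then obtain c' where c': "c' \<in> Cor E" "c * c' - E \<in> JJ" using inv c by blast
  have "y * c * c' \<in> JJ" using yc by (rule J_mult_right)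
  moreover have "y * (c * c' - E) \<in> JJ" using c'(2) by (rule J_mult_left)
  ultimately have "y * c * c' - y * (c * c' - E) \<in> JJ" by (rule J_diff)
  moreover have "y * c * c' - y * (c * c' - E) = y" using yE by (simp add: algebra_simps)
  ultimately show False using yJ by simp
qed

lemma usum_hit:
  assumes "A \<subseteq> {..<N}" "i0 \<in> A"
  shows "(\<Sum>i\<in>A. U i (di i0) * f i) = E * f i0"
proof -
  have fA: "finite A" using assms(1) finite_subset by blast
  have "(\<Sum>i\<in>A. U i (di i0) * f i) = (\<Sum>i\<in>A. if i = i0 then E * f i else 0)"
  proof (rule sum.cong[OF refl])
    fix i assume "i \<in> A"
    then have "di i0 = di i \<longleftrightarrow> i = i0" using assms di_inj by (auto dest: inj_onD)
    then show "U i (di i0) * f i = (if i = i0 then E * f i else 0)" by (simp add: unitv_def)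
  qed
  also have "\<dots> = E * f i0" using fA assms(2) by (simp add: sum.delta')
  finally show ?thesis .
qed

lemma usum_miss:
  assumes "p \<notin> di ` A"
  shows "(\<Sum>i\<in>A. U i p * f i) = 0"
  using assms by (intro sum.neutral) (auto simp: unitv_def)

lemma tsum_hit:
  assumes "i0 < N"
  shows "(\<Sum>i<N. if di i0 = di i then d i else 0) = d i0"
proof -
  have "(\<Sum>i<N. if di i0 = di i then d i else 0) = (\<Sum>i<N. if i = i0 then d i else 0)"
    using assms di_inj by (intro sum.cong refl) (auto dest: inj_onD)
  also have "\<dots> = d i0" using assms by (simp add: sum.delta')
  finally show ?thesis .
qed

lemma tsum_miss:
  assumes "p \<notin> di ` {..<N}"
  shows "(\<Sum>i<N. if p = di i then d i else 0) = 0"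
  using assms by (intro sum.neutral) auto

end


context gen
begin

lemma unit_bset:
  assumes inj: "inj_on \<pi> {..<N}" and sub: "\<pi> ` {..<N} \<subseteq> {..<P}"
    and ex: "\<And>i p. i < N \<Longrightarrow> p < R \<Longrightarrow> col (\<pi> i) p = U i p"
  shows "BS (\<pi> ` {..<N})"
proof -
  have sumeq: "(\<Sum>j\<in>\<pi>`{..<N}. col j p * c j) = (\<Sum>i<N. U i p * c (\<pi> i))" if "p < R" for p c
    using that by (simp add: sum.reindex[OF inj] ex)
  show ?thesis unfolding bset_def
  proof (intro conjI allI impI ballI)
    show "\<pi> ` {..<N} \<subseteq> {..<P}" by fact
  next
    fix c j
    assume A: "(\<forall>j\<in>\<pi> ` {..<N}. c j \<in> Cor E) \<and> (\<forall>p<R. (\<Sum>j\<in>\<pi> ` {..<N}. col j p * c j) \<in> JJ)"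
      and j: "j \<in> \<pi> ` {..<N}"
    then obtain i0 where i0: "i0 < N" "j = \<pi> i0" by auto
    have "(\<Sum>j\<in>\<pi> ` {..<N}. col j (di i0) * c j) \<in> JJ" using A di_lt i0 by auto
    then have "E * c (\<pi> i0) \<in> JJ" using sumeq[of "di i0" c] di_lt[OF i0(1)] usum_hit[of "{..<N}" i0] i0 by simp
    moreover have "c (\<pi> i0) \<in> Cor E" using A i0 by auto
    ultimately show "c j \<in> JJ" using i0 by (simp add: Cor_mem)
  next
    fix d :: "nat \<Rightarrow> 'a" assume D: "\<forall>i<N. d i \<in> Cor E"
    define c where "c j = d (the_inv_into {..<N} \<pi> j)" for j
    have cpi: "c (\<pi> i) = d i" if "i < N" for i using that inj by (simp add: c_def the_inv_into_f_f)
    show "\<exists>c. (\<forall>j\<in>\<pi> ` {..<N}. c j \<in> Cor E) \<and>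
          (\<forall>p<R. (\<Sum>j\<in>\<pi> ` {..<N}. col j p * c j) - (\<Sum>i<N. if p = di i then d i else 0) \<in> JJ)"
    proof (intro exI conjI allI impI ballI)
      fix j assume "j \<in> \<pi> ` {..<N}" then show "c j \<in> Cor E" using cpi D by auto
    next
      fix p assume p: "p < R"
      have "(\<Sum>j\<in>\<pi> ` {..<N}. col j p * c j) = (\<Sum>i<N. U i p * d i)"
        using sumeq[OF p, of c] cpi by simp
      also have "\<dots> = (\<Sum>i<N. if p = di i then d i else 0)"
      proof (intro sum.cong refl)
        fix i assume "i \<in> {..<N}"
        then have "E * d i = d i" using D Cor_mem by blast
        then show "U i p * d i = (if p = di i then d i else 0)" by (simp add: unitv_def)
      qed
      finally show "(\<Sum>j\<in>\<pi> ` {..<N}. col j p * c j) - (\<Sum>i<N. if p = di i then d i else 0) \<in> JJ"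
        by (simp add: J_0)
    qed
  qed
qed

lemma not_bset_short:
  assumes L: "L < N" and inj: "inj_on \<pi> {..<L}"
    and ex: "\<And>i p. i < L \<Longrightarrow> p < R \<Longrightarrow> col (\<pi> i) p = U i p"
  shows "\<not> BS (\<pi> ` {..<L})"
proof
  assume B: "BS (\<pi> ` {..<L})"
  define d where "d i = (if i = L then E else 0)" for i
  have D: "\<forall>i<N. d i \<in> Cor E" by (simp add: d_def Cor_E Cor_0)
  obtain c where c: "\<forall>p<R. (\<Sum>j\<in>\<pi> ` {..<L}. col j p * c j) - (\<Sum>i<N. if p = di i then d i else 0) \<in> JJ"
    using B[unfolded bset_def, THEN conjunct2, THEN conjunct2, THEN spec[of _ d], THEN mp, OF D] by blast
  have pR: "di L < R" using di_lt L by simp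
  have "(\<Sum>j\<in>\<pi> ` {..<L}. col j (di L) * c j) = (\<Sum>i<L. U i (di L) * c (\<pi> i))"
    using pR by (simp add: sum.reindex[OF inj] ex)
  also have "\<dots> = 0"
  proof (rule usum_miss)
    show "di L \<notin> di ` {..<L}" using di_inj L by (auto dest: inj_onD)
  qed
  finally have "0 - (\<Sum>i<N. if di L = di i then d i else 0) \<in> JJ" using c pR by auto
  then have "- E \<in> JJ" using tsum_hit[OF L, of d] by (simp add: d_def)
  then show False using E_notJ J_uminus_iff by blast
qed

lemma frak_contra:
  assumes "FR S" "BS T" "lexn (sorted_list_of_set T) (sorted_list_of_set S)"
  shows False
  using assms unfolding genfrak_def
  by (metis lexordp_irreflexive' lexordp_trans)

lemma nth_facts:
  assumes "finite (S::nat set)"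
  defines "js \<equiv> sorted_list_of_set S"
  shows "S = (!) js ` {..<length js}" "inj_on ((!) js) {..<length js}"
    "\<And>i i'. i < i' \<Longrightarrow> i' < length js \<Longrightarrow> js ! i < js ! i'"
proof -
  have sw: "sorted_wrt (<) js" "set js = S" "distinct js" using assms by (auto simp: js_def)
  show "S = (!) js ` {..<length js}" using sw(2) by (auto simp: set_conv_nth)
  show "inj_on ((!) js) {..<length js}" using sw(3) by (intro inj_on_nth) auto
  show "\<And>i i'. i < i' \<Longrightarrow> i' < length js \<Longrightarrow> js ! i < js ! i'"
    using sw(1) sorted_wrt_nth_less by blast
qed

lemma frak_length:
  assumes F: "FR S"
    and ex: "\<And>i p. i < N \<Longrightarrow> p < R \<Longrightarrow> col (sorted_list_of_set S ! i) p = U i p"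
  shows "length (sorted_list_of_set S) = N"
proof -
  define js where "js = sorted_list_of_set S"
  have BSS: "BS S" using F by (simp add: genfrak_def)
  then have fS: "finite S" unfolding bset_def using finite_subset by blast
  note nf = nth_facts[OF fS, folded js_def]
  have sw: "sorted_wrt (<) js" "set js = S" "distinct js" using fS by (auto simp: js_def)
  show ?thesis
  proof (rule ccontr)
    assume ne: "length (sorted_list_of_set S) \<noteq> N"
    show False
    proof (cases "length js < N")
      case True
      have "\<not> BS ((!) js ` {..<length js})"
        using True nf(2) ex by (intro not_bset_short) (auto simp: js_def)
      then show False using BSS nf(1) by simp
    next
      case False
      then have lt: "N < length js" using ne js_def by simp
      let ?S' = "(!) js ` {..<N}"
      have inj': "inj_on ((!) js) {..<N}" by (rule inj_on_subset[OF nf(2)]) (use lt in auto)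
      have "?S' \<subseteq> S" by (subst nf(1)) (use lt in auto)
      then have "?S' \<subseteq> {..<P}" using BSS by (auto simp: bset_def)
      then have B': "BS ?S'" using inj' ex by (intro unit_bset) (auto simp: js_def)
      have setT: "set (take N js) = ?S'" using lt by (auto simp: set_conv_nth) (metis nth_take)
      have sT: "sorted_list_of_set ?S' = take N js"
        using sls_eq[of "take N js"] sw(1) setT by simp
      have lx: "lexn (take N js) js"
        using lexordp_append_rightI[of "drop N js" "take N js"] lt by simp
      have "S = ?S' \<or> lexn js (sorted_list_of_set ?S')"
        using F B' unfolding genfrak_def js_def by blast
      then show False
      proof
        assume "S = ?S'"
        then have "js = take N js" using sT js_def by simp
        from arg_cong[OF this, of length] show False using lt by simp
      next
        assume "lexn js (sorted_list_of_set ?S')"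
        then show False using lx sT by (metis lexordp_irreflexive' lexordp_trans)
      qed
    qed
  qed
qed

end


context gen
begin

lemma frak_rref:
  assumes F: "FR S" and len: "length (sorted_list_of_set S) = N"
    and ex: "\<And>i p. i < N \<Longrightarrow> p < R \<Longrightarrow> col (sorted_list_of_set S ! i) p = U i p"
    and jP: "j < P" and jS: "j \<notin> S" and t: "t < N" and jt: "j < sorted_list_of_set S ! t"
    and p0: "p0 < R" "p0 \<notin> di ` {..<t}"
  shows "col j p0 \<in> JJ"
proof -
  define js where "js = sorted_list_of_set S"
  define \<pi> where "\<pi> = (!) js"
  have BSS: "BS S" using F by (simp add: genfrak_def)
  then have fS: "finite S" unfolding bset_def using finite_subset by blast
  note nf = nth_facts[OF fS, folded js_def]
  have lenN: "length js = N" using len js_def by simp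
  have Sim: "S = \<pi> ` {..<N}" using nf(1) lenN \<pi>_def by simp
  have inj: "inj_on \<pi> {..<N}" using nf(2) lenN \<pi>_def by simp
  have mono: "\<pi> i < \<pi> i'" if "i < i'" "i' < N" for i i' using nf(3) that lenN \<pi>_def by simp
  have monole: "\<pi> i \<le> \<pi> i'" if "i \<le> i'" "i' < N" for i i'
    using mono[of i i'] that by (cases "i = i'") auto
  have exx: "col (\<pi> i) p = U i p" if "i < N" "p < R" for i p using ex that \<pi>_def js_def by simp
  have jt': "j < \<pi> t" using jt \<pi>_def js_def by simp
  have SP: "S \<subseteq> {..<P}" using BSS by (simp add: bset_def)
  have sumS: "(\<Sum>x\<in>S. col x p * c x) = (\<Sum>i<N. U i p * c (\<pi> i))" if "p < R" for p c
    using that by (simp add: Sim sum.reindex[OF inj] exx)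
  have piS: "\<pi> i \<in> S" if "i < N" for i using Sim that by auto
  have ind: "\<forall>x\<in>S. c x \<in> JJ" if "\<forall>x\<in>S. c x \<in> Cor E" "\<forall>p<R. (\<Sum>x\<in>S. col x p * c x) \<in> JJ" for c
    using BSS that unfolding bset_def by blast
  have spanS: "\<exists>c. (\<forall>x\<in>S. c x \<in> Cor E) \<and>
      (\<forall>p<R. (\<Sum>x\<in>S. col x p * c x) - (\<Sum>i<N. if p = di i then d i else 0) \<in> JJ)"
    if "\<forall>i<N. d i \<in> Cor E" for d
    using BSS[unfolded bset_def, THEN conjunct2, THEN conjunct2, THEN spec[of _ d], THEN mp, OF that] .
  have extra: "col j p \<in> JJ" if p: "p < R" "p \<notin> di ` {..<N}" for p
  proof (rule ccontr)
    assume yJ: "col j p \<notin> JJ"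
    let ?T = "insert j S"
    have sumT: "(\<Sum>x\<in>?T. col x p' * c x) = col j p' * c j + (\<Sum>x\<in>S. col x p' * c x)" for p' c
      using fS jS by simp
    have BT: "BS ?T" unfolding bset_def
    proof (intro conjI allI impI)
      show "?T \<subseteq> {..<P}" using SP jP by auto
    next
      fix c assume A: "(\<forall>x\<in>?T. c x \<in> Cor E) \<and> (\<forall>p<R. (\<Sum>x\<in>?T. col x p * c x) \<in> JJ)"
      have "(\<Sum>x\<in>S. col x p * c x) = 0" using sumS[OF p(1)] usum_miss[OF p(2)] by simp
      then have "col j p * c j \<in> JJ" using A p(1) sumT[of p c] by auto
      then have cj: "c j \<in> JJ" using cancel[OF col_right yJ] A by auto
      have "(\<Sum>x\<in>S. col x p' * c x) \<in> JJ" if "p' < R" for p'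
      proof -
        have "(\<Sum>x\<in>?T. col x p' * c x) - col j p' * c j \<in> JJ"
          using A that cj by (intro J_diff J_mult_left) auto
        then show ?thesis using sumT[of p' c] by simp
      qed
      then have "\<forall>x\<in>S. c x \<in> JJ" using ind[of c] A by auto
      then show "\<forall>x\<in>?T. c x \<in> JJ" using cj by auto
    next
      fix d assume D: "\<forall>i<N. d i \<in> Cor E"
      obtain c where c: "\<forall>x\<in>S. c x \<in> Cor E"
        "\<forall>p<R. (\<Sum>x\<in>S. col x p * c x) - (\<Sum>i<N. if p = di i then d i else 0) \<in> JJ"
        using spanS[OF D] by blast
      have eqs: "(\<Sum>x\<in>?T. col x p' * (c(j := 0)) x) = (\<Sum>x\<in>S. col x p' * c x)" for p'
      proof -
        have "(\<Sum>x\<in>S. col x p' * (c(j := 0)) x) = (\<Sum>x\<in>S. col x p' * c x)"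
          by (rule sum.cong) (use jS in auto)
        then show ?thesis using sumT[of p' "c(j := 0)"] by simp
      qed
      show "\<exists>c. (\<forall>x\<in>?T. c x \<in> Cor E) \<and>
          (\<forall>p<R. (\<Sum>x\<in>?T. col x p * c x) - (\<Sum>i<N. if p = di i then d i else 0) \<in> JJ)"
        by (rule exI[of _ "c(j := 0)"]) (use c eqs Cor_0 in auto)
    qed
    have "lexn (sorted_list_of_set ?T) (sorted_list_of_set S)"
      by (rule lex_L1[of _ _ j "\<pi> t"]) (use fS jS jt' piS[OF t] in auto)
    then show False using frak_contra[OF F BT] by blast
  qed
  show ?thesis
  proof (rule ccontr)
    assume yJ: "col j p0 \<notin> JJ"
    then obtain i0 where i0: "i0 < N" "p0 = di i0" using extra p0(1) by blast
    have ti0: "t \<le> i0" using p0(2) i0 by (cases "i0 < t") auto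
    define y where "y = col j p0"
    have yC: "y \<in> Cor E" using Cor_col[OF i0(1)] i0 y_def by simp
    let ?I0 = "{..<N} - {i0}"
    let ?T = "insert j (S - {\<pi> i0})"
    have SI0: "S - {\<pi> i0} = \<pi> ` ?I0" using Sim inj i0(1) by (auto simp: inj_on_def)
    have injI0: "inj_on \<pi> ?I0" using inj by (rule inj_on_subset) auto
    have sumT: "(\<Sum>x\<in>?T. col x p * c x) = col j p * c j + (\<Sum>i\<in>?I0. U i p * c (\<pi> i))"
      if "p < R" for p c
    proof -
      have "(\<Sum>x\<in>?T. col x p * c x) = col j p * c j + (\<Sum>x\<in>S - {\<pi> i0}. col x p * c x)"
        using fS jS by simp
      also have "(\<Sum>x\<in>S - {\<pi> i0}. col x p * c x) = (\<Sum>i\<in>?I0. U i p * c (\<pi> i))"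
        unfolding SI0 using that by (simp add: sum.reindex[OF injI0] exx)
      finally show ?thesis .
    qed
    have miss0: "di i0 \<notin> di ` ?I0" using di_inj i0(1) by (auto dest: inj_onD)
    have BT: "BS ?T" unfolding bset_def
    proof (intro conjI allI impI)
      show "?T \<subseteq> {..<P}" using SP jP by auto
    next
      fix c assume A: "(\<forall>x\<in>?T. c x \<in> Cor E) \<and> (\<forall>p<R. (\<Sum>x\<in>?T. col x p * c x) \<in> JJ)"
      have "col j p0 * c j \<in> JJ"
        using A p0(1) sumT[of p0 c] usum_miss[OF miss0, of "\<lambda>i. c (\<pi> i)"] i0(2) by auto
      then have cj: "c j \<in> JJ" using cancel[OF col_right yJ] A by auto
      have ci: "c (\<pi> i1) \<in> JJ" if i1: "i1 \<in> ?I0" for i1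
      proof -
        have pR: "di i1 < R" using di_lt i1 by auto
        have "(\<Sum>i\<in>?I0. U i (di i1) * c (\<pi> i)) = E * c (\<pi> i1)"
          by (rule usum_hit) (use i1 in auto)
        also have "E * c (\<pi> i1) = c (\<pi> i1)"
        proof -
          have "\<pi> i1 \<in> ?T" using i1 SI0 by auto
          then show ?thesis using A Cor_mem by blast
        qed
        finally have eq: "(\<Sum>x\<in>?T. col x (di i1) * c x) = col j (di i1) * c j + c (\<pi> i1)"
          using sumT[OF pR, of c] by simp
        have "(\<Sum>x\<in>?T. col x (di i1) * c x) - col j (di i1) * c j \<in> JJ"
          using A pR cj by (intro J_diff J_mult_left) auto
        then show ?thesis using eq by simp
      qed
      show "\<forall>x\<in>?T. c x \<in> JJ" using cj ci SI0 by auto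
    next
      fix d assume D: "\<forall>i<N. d i \<in> Cor E"
      obtain y' where y': "y' \<in> Cor E" "y * y' - E \<in> JJ" using inv[OF yC] yJ y_def by blast
      define inv\<pi> where "inv\<pi> = the_inv_into {..<N} \<pi>"
      define c where "c x = (if x = j then y' * d i0 else d (inv\<pi> x) - col j (di (inv\<pi> x)) * (y' * d i0))" for x
      have cj: "c j = y' * d i0" by (simp add: c_def)
      have cpi: "c (\<pi> i) = d i - col j (di i) * (y' * d i0)" if "i \<in> ?I0" for i
      proof -
        have "\<pi> i \<noteq> j" using jS piS that by auto
        moreover have "inv\<pi> (\<pi> i) = i" using that inj by (simp add: inv\<pi>_def the_inv_into_f_f)
        ultimately show ?thesis by (simp add: c_def)
      qed
      have dd: "E * d i = d i" if "i < N" for i using D that Cor_mem by blast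
      have CC: "\<forall>x\<in>?T. c x \<in> Cor E"
      proof
        fix x assume "x \<in> ?T"
        then consider "x = j" | i where "i \<in> ?I0" "x = \<pi> i" using SI0 by auto
        then show "c x \<in> Cor E"
        proof cases
          case 1 then show ?thesis using cj Cor_mult y' D i0 by auto
        next
          case 2 then show ?thesis using cpi[OF 2(1)] D Cor_diff Cor_mult Cor_col y' i0 by auto
        qed
      qed
      have SP': "(\<Sum>x\<in>?T. col x p * c x) - (\<Sum>i<N. if p = di i then d i else 0) \<in> JJ" if pR: "p < R" for p
      proof (cases "p \<in> di ` {..<N}")
        case True
        then obtain i1 where i1: "i1 < N" "p = di i1" by auto
        have tg: "(\<Sum>i<N. if p = di i then d i else 0) = d i1" using tsum_hit[OF i1(1)] i1 by simp
        show ?thesis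
        proof (cases "i1 = i0")
          case True
          have "(\<Sum>i\<in>?I0. U i p * c (\<pi> i)) = 0" using usum_miss[OF miss0] i1 True by simp
          then have "(\<Sum>x\<in>?T. col x p * c x) - (\<Sum>i<N. if p = di i then d i else 0)
              = y * (y' * d i0) - d i0" using sumT[OF pR, of c] tg cj y_def i0 i1 True by simp
          also have "\<dots> = (y * y' - E) * d i0" using dd[OF i0(1)] by (simp add: algebra_simps)
          finally show ?thesis using y'(2) J_mult_right by simp
        next
          case False
          have "(\<Sum>i\<in>?I0. U i p * c (\<pi> i)) = E * c (\<pi> i1)"
            using usum_hit[of ?I0 i1 "\<lambda>i. c (\<pi> i)"] i1 False by auto
          also have "\<dots> = d i1 - col j (di i1) * (y' * d i0)"
          proof -
            have "c (\<pi> i1) = d i1 - col j (di i1) * (y' * d i0)" using cpi[of i1] i1 False by simp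
            moreover have "E * (d i1 - col j (di i1) * (y' * d i0)) = E * d i1 - (E * col j (di i1)) * (y' * d i0)"
              by (simp add: right_diff_distrib mult.assoc)
            ultimately show ?thesis using dd[OF i1(1)] col_left[OF i1(1), of j] by simp
          qed
          finally have "(\<Sum>x\<in>?T. col x p * c x) - (\<Sum>i<N. if p = di i then d i else 0) = 0"
            using sumT[OF pR, of c] tg cj i1 by simp
          then show ?thesis by (simp add: J_0)
        qed
      next
        case False
        have "(\<Sum>i\<in>?I0. U i p * c (\<pi> i)) = 0" using False by (intro usum_miss) auto
        moreover have "(\<Sum>i<N. if p = di i then d i else 0) = 0" using tsum_miss[OF False] .
        moreover have "col j p * c j \<in> JJ" using extra[OF pR False] by (rule J_mult_right)
        ultimately show ?thesis using sumT[OF pR, of c] by simp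
      qed
      show "\<exists>c. (\<forall>x\<in>?T. c x \<in> Cor E) \<and>
          (\<forall>p<R. (\<Sum>x\<in>?T. col x p * c x) - (\<Sum>i<N. if p = di i then d i else 0) \<in> JJ)"
        using CC SP' by blast
    qed
    have pit: "\<pi> t \<le> \<pi> i0" using monole ti0 i0 by simp
    have "lexn (sorted_list_of_set ?T) (sorted_list_of_set S)"
    proof (rule lex_L1[of _ _ j "\<pi> t"])
      show "insert j (S - {\<pi> i0}) \<inter> {..<j} = S \<inter> {..<j}" using pit jt' by auto
    qed (use fS jS jt' piS[OF t] in auto)
    then show False using frak_contra[OF F BT] by blast
  qed
qed

end


context gen
begin

lemma rref_frak:
  assumes mono: "\<And>i i'. i < i' \<Longrightarrow> i' < N \<Longrightarrow> \<pi> i < \<pi> i'" and sub: "\<And>i. i < N \<Longrightarrow> \<pi> i < P"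
    and ex: "\<And>i p. i < N \<Longrightarrow> p < R \<Longrightarrow> col (\<pi> i) p = U i p"
    and rref: "\<And>j t p. j < P \<Longrightarrow> j \<notin> \<pi> ` {..<N} \<Longrightarrow> t < N \<Longrightarrow> j < \<pi> t \<Longrightarrow> p < R
                 \<Longrightarrow> p \<notin> di ` {..<t} \<Longrightarrow> col j p \<in> JJ"
  shows "sorted_list_of_set (\<pi> ` {..<N}) = map \<pi> [0..<N]" and "FR (\<pi> ` {..<N})"
proof -
  let ?S = "\<pi> ` {..<N}"
  let ?ss = "map \<pi> [0..<N]"
  have sw: "sorted_wrt (<) ?ss" unfolding sorted_wrt_iff_nth_less using mono by auto
  have setss: "set ?ss = ?S" by auto
  show sS: "sorted_list_of_set ?S = ?ss" using sls_eq[OF sw] setss by simp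
  have inj: "inj_on \<pi> A" if "A \<subseteq> {..<N}" for A
  proof (rule inj_onI)
    fix x y assume "x \<in> A" "y \<in> A" "\<pi> x = \<pi> y"
    then show "x = y" using mono[of x y] mono[of y x] that by (cases x y rule: linorder_cases) auto
  qed
  have BS: "BS ?S" using inj[of "{..<N}"] sub ex by (intro unit_bset) auto
  show "FR ?S" unfolding genfrak_def
  proof (intro conjI allI impI BS)
    fix T assume BT: "BS T"
    then have fT: "finite T" and TP: "T \<subseteq> {..<P}" unfolding bset_def using finite_subset by blast+
    let ?ts = "sorted_list_of_set T"
    have swt: "sorted_wrt (<) ?ts" "set ?ts = T" using fT by auto
    have "\<not> lexn ?ts ?ss"
    proof
      assume "lexn ?ts ?ss"
      then consider (pre) x vs where "?ss = ?ts @ x # vs"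
        | (dif) us a b vs ws where "a < b" "?ts = us @ a # vs" "?ss = us @ b # ws"
        unfolding lexordp_iff by blast
      then show False
      proof cases
        case pre
        let ?L = "length ?ts"
        have LN: "?L < N" using arg_cong[OF pre, of length] by simp
        have "take ?L ?ss = ?ts" using pre by simp
        then have tsm: "?ts = map \<pi> [0..<?L]" using LN by (simp add: take_map)
        then have "T = \<pi> ` {..<?L}" using swt(2) by (metis atLeast0LessThan set_map set_upt)
        moreover have "\<not> BS (\<pi> ` {..<?L})"
          using LN inj[of "{..<?L}"] ex by (intro not_bset_short) auto
        ultimately show False using BT by simp
      next
        case dif
        let ?t = "length us"
        have tN: "?t < N" using arg_cong[OF dif(3), of length] by simp
        have bt: "b = \<pi> ?t" using arg_cong[OF dif(3), of "\<lambda>l. l ! ?t"] tN by simp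
        have "take ?t ?ss = us" using dif(3) by simp
        then have usm: "us = map \<pi> [0..<?t]" using tN by (simp add: take_map)
        then have setus: "set us = \<pi> ` {..<?t}" by (metis atLeast0LessThan set_map set_upt)
        have aT: "a \<in> T" using swt(2) dif(2) by auto
        then have aP: "a < P" using TP by auto
        have usa: "\<forall>x\<in>set us. x < a" using swt(1) dif(2) by (simp add: sorted_wrt_append)
        have aS: "a \<notin> ?S"
        proof
          assume "a \<in> ?S"
          then obtain i where i: "i < N" "a = \<pi> i" by auto
          show False
          proof (cases "i < ?t")
            case True then have "a \<in> set us" using setus i by auto
            then show False using usa by auto
          next
            case False
            then have "\<pi> ?t \<le> \<pi> i" using mono[of ?t i] i by (cases "?t = i") auto
            then show False using i bt dif(1) by simp
          qed
        qed
        have rr: "col a p \<in> JJ" if "p < R" "p \<notin> di ` {..<?t}" for p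
          using rref[OF aP aS tN _ that] dif(1) bt by simp
        define inv\<pi> where "inv\<pi> = the_inv_into {..<N} \<pi>"
        define c where "c x = (if x = a then E else if x \<in> \<pi> ` {..<?t} then - col a (di (inv\<pi> x)) else 0)" for x
        have cpi: "c (\<pi> i) = - col a (di i)" if "i < ?t" for i
        proof -
          have "\<pi> i \<noteq> a" using aS that tN by auto
          moreover have "inv\<pi> (\<pi> i) = i" using that tN inj[of "{..<N}"] by (simp add: inv\<pi>_def the_inv_into_f_f)
          ultimately show ?thesis using that by (simp add: c_def)
        qed
        have ca: "c a = E" by (simp add: c_def)
        have aU: "a \<notin> \<pi> ` {..<?t}" using aS tN by auto
        have injt: "inj_on \<pi> {..<?t}" using inj tN by simp
        have subT: "insert a (\<pi> ` {..<?t}) \<subseteq> T" using aT setus swt(2) dif(2) by auto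
        have sumT: "(\<Sum>x\<in>T. col x p * c x) = col a p + (\<Sum>i<?t. U i p * (- col a (di i)))"
          if pR: "p < R" for p
        proof -
          have "(\<Sum>x\<in>T. col x p * c x) = (\<Sum>x\<in>insert a (\<pi> ` {..<?t}). col x p * c x)"
            by (rule sum.mono_neutral_right[OF fT subT]) (auto simp: c_def)
          also have "\<dots> = col a p * c a + (\<Sum>x\<in>\<pi> ` {..<?t}. col x p * c x)"
            using aU by simp
          also have "(\<Sum>x\<in>\<pi> ` {..<?t}. col x p * c x) = (\<Sum>i<?t. U i p * (- col a (di i)))"
            using pR tN by (simp add: sum.reindex[OF injt] cpi ex)
          finally show ?thesis using ca col_right by simp
        qed
        have CC: "\<forall>x\<in>T. c x \<in> Cor E"
        proof
          fix x assume "x \<in> T"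
          show "c x \<in> Cor E"
          proof (cases "x = a")
            case True then show ?thesis using ca Cor_E by simp
          next
            case False
            show ?thesis
            proof (cases "x \<in> \<pi> ` {..<?t}")
              case True
              then obtain i where "i < ?t" "x = \<pi> i" by auto
              then show ?thesis using cpi Cor_uminus Cor_col tN by auto
            next
              case False then show ?thesis using \<open>x \<noteq> a\<close> by (simp add: c_def Cor_0)
            qed
          qed
        qed
        have ZZ: "\<forall>p<R. (\<Sum>x\<in>T. col x p * c x) \<in> JJ"
        proof (intro allI impI)
          fix p assume pR: "p < R"
          show "(\<Sum>x\<in>T. col x p * c x) \<in> JJ"
          proof (cases "p \<in> di ` {..<?t}")
            case True
            then obtain i1 where i1: "i1 < ?t" "p = di i1" by auto
            have "(\<Sum>i<?t. U i p * (- col a (di i))) = E * (- col a (di i1))"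
              using usum_hit[of "{..<?t}" i1 "\<lambda>i. - col a (di i)"] i1 tN by auto
            also have "\<dots> = - col a (di i1)" using col_left[of i1 a] i1 tN by simp
            finally show ?thesis using sumT[OF pR] i1 by (simp add: J_0)
          next
            case False
            have "(\<Sum>i<?t. U i p * (- col a (di i))) = 0" using usum_miss[OF False] .
            then show ?thesis using sumT[OF pR] rr[OF pR False] by simp
          qed
        qed
        have "\<forall>x\<in>T. c x \<in> JJ" using BT CC ZZ unfolding bset_def by blast
        then have "E \<in> JJ" using aT ca by auto
        then show False using E_notJ by simp
      qed
    qed
    moreover have "?ss = ?ts \<Longrightarrow> ?S = T" using setss swt(2) by metis
    ultimately show "?S = T \<or> lexn (sorted_list_of_set ?S) (sorted_list_of_set T)"
      using lexordp_linear[of ?ss ?ts] sS by auto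
  qed
qed

end


lemma sum_lessThan_add: "(\<Sum>a<A + (B::nat). g a) = (\<Sum>a<A. g a) + (\<Sum>i<B. g (A + i))"
  by (induct B arbitrary: A) (auto simp: add.assoc)

lemma off_Suc: "blk_off mu (Suc h) = blk_off mu h + mu h"
  by (simp add: blk_off_def)

lemma off_mono: "h \<le> h' \<Longrightarrow> blk_off mu h \<le> blk_off mu h'"
  unfolding blk_off_def by (rule sum_mono2) auto

lemma decomp_unique:
  assumes "i < mu h" "i' < mu h'" "blk_off mu h + i = blk_off mu h' + i'"
  shows "h = h' \<and> i = i'"
proof -
  have False if "h < h'" "i < mu h" "blk_off mu h + i = blk_off mu h' + i'" for h h' i i'
  proof -
    have "blk_off mu h + i < blk_off mu (Suc h)" using that by (simp add: off_Suc)
    also have "\<dots> \<le> blk_off mu h'" using that by (intro off_mono) simp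
    finally show False using that by simp
  qed
  then have "h = h'" using assms by (cases h h' rule: linorder_cases) (blast, blast, metis)
  then show ?thesis using assms by simp
qed

lemma decomp_iff: "i < mu h \<Longrightarrow> i' < mu h' \<Longrightarrow> (blk_off mu h + i = blk_off mu h' + i') \<longleftrightarrow> (h = h' \<and> i = i')"
  using decomp_unique by blast

lemma decomp_exists: "a < blk_off mu Q \<Longrightarrow> \<exists>h<Q. \<exists>i<mu h. a = blk_off mu h + i"
proof (induct Q)
  case 0 then show ?case by (simp add: blk_off_def)
next
  case (Suc Q)
  show ?case
  proof (cases "a < blk_off mu Q")
    case True then show ?thesis using Suc by (meson less_Suc_eq)
  next
    case False
    then have "a - blk_off mu Q < mu Q" "a = blk_off mu Q + (a - blk_off mu Q)"
      using Suc(2) by (auto simp: off_Suc)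
    then show ?thesis by blast
  qed
qed

lemma sum_blocks: "(\<Sum>a<blk_off mu Q. g a) = (\<Sum>h<Q. \<Sum>i<mu h. g (blk_off mu h + i))"
  by (induct Q) (simp_all add: off_Suc sum_lessThan_add blk_off_def)

lemma sum_if_const: "(\<Sum>x\<in>A. if P then f x else 0) = (if P then sum f A else 0)"
  by simp

lemma mu_total_off: "mu_total q mu = blk_off mu q"
  by (simp add: mu_total_def blk_off_def)

lemma AW_phi_eval:
  assumes "h < q" "i < mu h" "k < q" "j < mu k"
  shows "AW_phi q mu u v x (blk_off mu h + i) (blk_off mu k + j) = u h i * x * v k j"
proof -
  have "AW_phi q mu u v x (blk_off mu h + i) (blk_off mu k + j) =
    (\<Sum>h'<q. \<Sum>i'<mu h'. \<Sum>k'<q. \<Sum>j'<mu k'.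
      if h' = h then (if i' = i then (if k' = k then (if j' = j then u h' i' * x * v k' j' else 0) else 0) else 0) else 0)"
    unfolding AW_phi_def using assms by (intro sum.cong refl) (auto simp: decomp_iff)
  also have "\<dots> = u h i * x * v k j"
    using assms by (simp add: sum_if_const sum.delta sum.delta' cong: if_cong)
  finally show ?thesis .
qed


lemma sum_grid: "0 < (M::nat) \<Longrightarrow> (\<Sum>r<M * n. g r) = (\<Sum>a<n. \<Sum>c<M. g (a * M + c))"
proof -
  assume M: "0 < M"
  have "(\<Sum>r<M * n. g r) = (\<Sum>a<n. \<Sum>r\<in>{a * M..<a * M + M}. g r)"
    using sum.nat_group[of g M n] by (simp add: mult.commute)
  also have "\<dots> = (\<Sum>a<n. \<Sum>c<M. g (a * M + c))"
  proof (rule sum.cong[OF refl])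
    fix a
    show "(\<Sum>r\<in>{a * M..<a * M + M}. g r) = (\<Sum>c<M. g (a * M + c))"
      by (simp add: sum.atLeastLessThan_shift_0[of g "a * M"] atLeast0LessThan comp_def)
  qed
  finally show ?thesis .
qed

locale aw =
  fixes q :: nat and mu :: "nat \<Rightarrow> nat" and e u v :: "nat \<Rightarrow> nat \<Rightarrow> 'a::ring_1"
  assumes AW: "AW_setup q mu e u v"
begin

abbreviation "MM \<equiv> mu_total q mu"

lemma mu_pos: "k < q \<Longrightarrow> 0 < mu k"
  using AW by (simp add: AW_setup_def)

lemma e_idem: "k < q \<Longrightarrow> i < mu k \<Longrightarrow> e k i * e k i = e k i"
  using AW by (simp add: AW_setup_def)

lemma e_sum: "(\<Sum>k<q. \<Sum>i<mu k. e k i) = 1"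
  using AW by (simp add: AW_setup_def)

lemma uv: "h < q \<Longrightarrow> i < mu h \<Longrightarrow> u h i = e h 0 * u h i * e h i \<and> v h i = e h i * v h i * e h 0 \<and>
    u h i * v h i = e h 0 \<and> v h i * u h i = e h i"
  using AW unfolding AW_setup_def by blast

lemma u_left: "h < q \<Longrightarrow> i < mu h \<Longrightarrow> e h 0 * u h i = u h i"
proof -
  assume a: "h < q" "i < mu h"
  have "e h 0 * u h i = e h 0 * (e h 0 * u h i * e h i)" using uv[OF a] by metis
  also have "\<dots> = (e h 0 * e h 0) * u h i * e h i" by (simp add: mult.assoc)
  also have "\<dots> = u h i" using e_idem[of h 0] a mu_pos[of h] uv[OF a] by metis
  finally show ?thesis .
qed

lemma v_right: "k < q \<Longrightarrow> j < mu k \<Longrightarrow> v k j * e k 0 = v k j"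
proof -
  assume a: "k < q" "j < mu k"
  have "v k j * e k 0 = (e k j * v k j * e k 0) * e k 0" using uv[OF a] by metis
  also have "\<dots> = e k j * v k j * (e k 0 * e k 0)" by (simp add: mult.assoc)
  also have "\<dots> = v k j" using e_idem[of k 0] a mu_pos[of k] uv[OF a] by metis
  finally show ?thesis .
qed

lemma M_off: "MM = blk_off mu q" by (rule mu_total_off)

lemma off_le: "k < q \<Longrightarrow> blk_off mu k + mu k \<le> MM"
  using off_mono[of "Suc k" q mu] by (simp add: off_Suc M_off)

lemma M_pos: "k < q \<Longrightarrow> 0 < MM"
  using off_le[of k] mu_pos[of k] by simp

lemma decomp: "a < MM \<Longrightarrow> \<exists>h<q. \<exists>i<mu h. a = blk_off mu h + i"
  using decomp_exists[of a mu q] by (simp add: M_off)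

lemma phi_mult:
  assumes "a < MM" "b < MM"
  shows "AW_phi q mu u v (x * y) a b = (\<Sum>c<MM. AW_phi q mu u v x a c * AW_phi q mu u v y c b)"
proof -
  obtain h i where hi: "h < q" "i < mu h" "a = blk_off mu h + i" using decomp assms(1) by blast
  obtain k j where kj: "k < q" "j < mu k" "b = blk_off mu k + j" using decomp assms(2) by blast
  have "(\<Sum>c<MM. AW_phi q mu u v x a c * AW_phi q mu u v y c b) =
      (\<Sum>h'<q. \<Sum>i'<mu h'. (u h i * x * v h' i') * (u h' i' * y * v k j))"
    unfolding M_off sum_blocks using hi kj by (intro sum.cong refl) (simp add: AW_phi_eval)
  also have "\<dots> = (\<Sum>h'<q. \<Sum>i'<mu h'. (u h i * x) * e h' i' * (y * v k j))"
  proof (intro sum.cong refl)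
    fix h' i' assume "h' \<in> {..<q}" "i' \<in> {..<mu h'}"
    then have "v h' i' * u h' i' = e h' i'" using uv by auto
    then show "(u h i * x * v h' i') * (u h' i' * y * v k j) = (u h i * x) * e h' i' * (y * v k j)"
      by (metis mult.assoc)
  qed
  also have "\<dots> = (u h i * x) * (\<Sum>h'<q. \<Sum>i'<mu h'. e h' i') * (y * v k j)"
    by (simp add: sum_distrib_left sum_distrib_right)
  also have "\<dots> = u h i * (x * y) * v k j" by (simp add: e_sum mult.assoc)
  finally show ?thesis using hi kj by (simp add: AW_phi_eval)
qed

lemma phi_sum:
  assumes "a < MM" "b < MM"
  shows "AW_phi q mu u v (\<Sum>t\<in>A. f t) a b = (\<Sum>t\<in>A. AW_phi q mu u v (f t) a b)"
proof -
  obtain h i where hi: "h < q" "i < mu h" "a = blk_off mu h + i" using decomp assms(1) by blast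
  obtain k j where kj: "k < q" "j < mu k" "b = blk_off mu k + j" using decomp assms(2) by blast
  show ?thesis using hi kj by (simp add: AW_phi_eval sum_distrib_left sum_distrib_right)
qed

lemma phimat_comp:
  assumes k: "k < q"
  shows "AW_phi_mat q mu u v (mat_comp n H2 H1) p s =
    (\<Sum>r<MM * n. AW_phi_mat q mu u v H2 p r * AW_phi_mat q mu u v H1 r s)"
proof -
  have M0: "0 < MM" using M_pos[OF k] .
  have pm: "p mod MM < MM" "s mod MM < MM" using M0 by auto
  have "AW_phi_mat q mu u v (mat_comp n H2 H1) p s =
      (\<Sum>a<n. \<Sum>c<MM. AW_phi q mu u v (H2 (p div MM) a) (p mod MM) c * AW_phi q mu u v (H1 a (s div MM)) c (s mod MM))"
    unfolding AW_phi_mat_def mat_comp_def using pm by (simp add: phi_sum phi_mult)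
  also have "\<dots> = (\<Sum>r<MM * n. AW_phi_mat q mu u v H2 p r * AW_phi_mat q mu u v H1 r s)"
    unfolding sum_grid[OF M0] AW_phi_mat_def using M0 by simp
  finally show ?thesis .
qed

lemma dist_div: "k < q \<Longrightarrow> dist_idx q mu k j div MM = j div mu k"
  and dist_mod: "k < q \<Longrightarrow> dist_idx q mu k j mod MM = blk_off mu k + j mod mu k"
proof -
  assume k: "k < q"
  have lt: "blk_off mu k + j mod mu k < MM" using off_le[OF k] mu_pos[OF k]
    by (meson add_less_le_mono le_refl mod_less_divisor order_less_le_trans nat_add_left_cancel_less)
  show "dist_idx q mu k j div MM = j div mu k" using lt unfolding dist_idx_def
    by (simp add: add.assoc)
  show "dist_idx q mu k j mod MM = blk_off mu k + j mod mu k" using lt unfolding dist_idx_def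
    by (simp add: add.assoc)
qed

lemma dist_inj: "k < q \<Longrightarrow> inj_on (dist_idx q mu k) A"
proof (rule inj_onI)
  fix x y assume k: "k < q" and eq: "dist_idx q mu k x = dist_idx q mu k y"
  have "x div mu k = y div mu k" using dist_div[OF k, of x] dist_div[OF k, of y] eq by simp
  moreover have "x mod mu k = y mod mu k" using dist_mod[OF k, of x] dist_mod[OF k, of y] eq by simp
  ultimately show "x = y" by (metis div_mult_mod_eq)
qed

lemma dist_lt: "k < q \<Longrightarrow> j < mu k * n \<Longrightarrow> dist_idx q mu k j < MM * n"
proof -
  assume k: "k < q" and j: "j < mu k * n"
  have jd: "j div mu k < n" using j mu_pos[OF k] by (simp add: div_less_iff_less_mult mult.commute)
  have "dist_idx q mu k j = (j div mu k) * MM + (dist_idx q mu k j mod MM)"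
    using dist_div[OF k, of j] by (metis div_mult_mod_eq)
  also have "\<dots> < (j div mu k) * MM + MM" using M_pos[OF k] by simp
  also have "\<dots> = Suc (j div mu k) * MM" by simp
  also have "\<dots> \<le> n * MM" using jd by (intro mult_right_mono) auto
  finally show ?thesis by (simp add: mult.commute)
qed

lemma phimat_col: "k < q \<Longrightarrow> AW_phi_mat q mu u v H p (dist_idx q mu k j) * e k 0 = AW_phi_mat q mu u v H p (dist_idx q mu k j)"
proof -
  assume k: "k < q"
  obtain h i where hi: "h < q" "i < mu h" "p mod MM = blk_off mu h + i" using decomp M_pos[OF k] by (meson mod_less_divisor)
  have jm: "j mod mu k < mu k" using mu_pos[OF k] by simp
  show ?thesis unfolding AW_phi_mat_def dist_mod[OF k] hi(3) AW_phi_eval[OF hi(1,2) k jm]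
    using v_right[OF k jm] by (simp add: mult.assoc)
qed

lemma phimat_row: "k < q \<Longrightarrow> e k 0 * AW_phi_mat q mu u v H (dist_idx q mu k i) s = AW_phi_mat q mu u v H (dist_idx q mu k i) s"
proof -
  assume k: "k < q"
  obtain h j where hj: "h < q" "j < mu h" "s mod MM = blk_off mu h + j" using decomp M_pos[OF k] by (meson mod_less_divisor)
  have im: "i mod mu k < mu k" using mu_pos[OF k] by simp
  show ?thesis unfolding AW_phi_mat_def dist_mod[OF k] hj(3) AW_phi_eval[OF k im hj(1,2)]
    using u_left[OF k im] by (simp add: mult.assoc[symmetric])
qed

lemma eps_facts:
  assumes k: "k < q"
  obtains \<epsilon> where "\<epsilon> - e k 0 \<in> JJ" "\<epsilon> \<notin> JJ"
    "\<And>x. \<epsilon> * x * \<epsilon> \<notin> JJ \<Longrightarrow> \<exists>y. \<epsilon> * x * \<epsilon> * (\<epsilon> * y * \<epsilon>) - \<epsilon> \<in> JJ \<and> \<epsilon> * y * \<epsilon> * (\<epsilon> * x * \<epsilon>) - \<epsilon> \<in> JJ"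
proof -
  have ex: "\<exists>eps :: nat \<Rightarrow> nat \<Rightarrow> nat \<Rightarrow> 'a.
       (\<forall>k<q. \<forall>i<mu k. \<forall>j<mu k. \<forall>k'<q. \<forall>i'<mu k'. \<forall>j'<mu k'.
          eps k i j * eps k' i' j' - (if k = k' \<and> j = i' then eps k i j' else 0) \<in> jacobson_radical) \<and>
       (\<forall>k<q. \<forall>i<mu k. eps k i i - e k i \<in> jacobson_radical) \<and>
       (\<forall>k<q. eps k 0 0 \<notin> jacobson_radical \<and>
          (\<forall>x. eps k 0 0 * x * eps k 0 0 \<notin> jacobson_radical \<longrightarrow>
             (\<exists>y. eps k 0 0 * x * eps k 0 0 * (eps k 0 0 * y * eps k 0 0) - eps k 0 0 \<in> jacobson_radical \<and>
                  eps k 0 0 * y * eps k 0 0 * (eps k 0 0 * x * eps k 0 0) - eps k 0 0 \<in> jacobson_radical)))"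
    using AW[unfolded AW_setup_def, THEN conjunct2, THEN conjunct2, THEN conjunct2, THEN conjunct2, THEN conjunct1] .
  then obtain eps :: "nat \<Rightarrow> nat \<Rightarrow> nat \<Rightarrow> 'a" where
    e1: "\<forall>k<q. \<forall>i<mu k. eps k i i - e k i \<in> JJ" and
    e2: "\<forall>k<q. eps k 0 0 \<notin> JJ \<and>
          (\<forall>x. eps k 0 0 * x * eps k 0 0 \<notin> JJ \<longrightarrow>
             (\<exists>y. eps k 0 0 * x * eps k 0 0 * (eps k 0 0 * y * eps k 0 0) - eps k 0 0 \<in> JJ \<and>
                  eps k 0 0 * y * eps k 0 0 * (eps k 0 0 * x * eps k 0 0) - eps k 0 0 \<in> JJ))"
    by (elim exE conjE) (rule that)
  show ?thesis
    by (rule that[of "eps k 0 0"]) (use e1 e2 k mu_pos[OF k] in auto)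
qed

lemma E_notJ: "k < q \<Longrightarrow> e k 0 \<notin> JJ"
proof
  assume k: "k < q" and E: "e k 0 \<in> JJ"
  obtain \<epsilon> where "\<epsilon> - e k 0 \<in> JJ" "\<epsilon> \<notin> JJ" using eps_facts[OF k] by blast
  then show False using J_cong_in E by blast
qed

lemma inv_lemma:
  assumes k: "k < q" and yC: "y \<in> Cor (e k 0)" and yJ: "y \<notin> JJ"
  shows "\<exists>y'\<in>Cor (e k 0). y * y' - e k 0 \<in> JJ \<and> y' * y - e k 0 \<in> JJ"
proof -
  let ?E = "e k 0"
  have Eid: "?E * ?E = ?E" using e_idem[OF k mu_pos[OF k]] .
  obtain \<epsilon> where ep: "\<epsilon> - ?E \<in> JJ" "\<epsilon> \<notin> JJ"
    and div: "\<And>x. \<epsilon> * x * \<epsilon> \<notin> JJ \<Longrightarrow> \<exists>y. \<epsilon> * x * \<epsilon> * (\<epsilon> * y * \<epsilon>) - \<epsilon> \<in> JJ \<and> \<epsilon> * y * \<epsilon> * (\<epsilon> * x * \<epsilon>) - \<epsilon> \<in> JJ"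
    using eps_facts[OF k] by blast
  have sand: "?E * x * ?E - \<epsilon> * x * \<epsilon> \<in> JJ" for x
  proof -
    have "?E * x - \<epsilon> * x \<in> JJ" using J_cong_mult[OF J_cong_sym[OF ep(1)], of x x] J_0 by simp
    then show ?thesis using J_cong_mult[OF _ J_cong_sym[OF ep(1)]] by blast
  qed
  have yE: "?E * y * ?E = y" using yC Cor_iff[OF Eid] by simp
  have y1: "y - \<epsilon> * y * \<epsilon> \<in> JJ" using sand[of y] yE by simp
  have "\<epsilon> * y * \<epsilon> \<notin> JJ" using y1 yJ J_cong_in by blast
  then obtain z where z: "\<epsilon> * y * \<epsilon> * (\<epsilon> * z * \<epsilon>) - \<epsilon> \<in> JJ" "\<epsilon> * z * \<epsilon> * (\<epsilon> * y * \<epsilon>) - \<epsilon> \<in> JJ"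
    using div by blast
  let ?y' = "?E * z * ?E"
  have y'C: "?y' \<in> Cor ?E" by (auto simp: Cor_def)
  have y'1: "?y' - \<epsilon> * z * \<epsilon> \<in> JJ" using sand[of z] .
  have "y * ?y' - ?E \<in> JJ"
    using J_cong_trans[OF J_cong_trans[OF J_cong_mult[OF y1 y'1] z(1)] ep(1)] .
  moreover have "?y' * y - ?E \<in> JJ"
    using J_cong_trans[OF J_cong_trans[OF J_cong_mult[OF y'1 y1] z(2)] ep(1)] .
  ultimately show ?thesis using y'C by blast
qed

lemma gen_inst:
  assumes k: "k < q"
  shows "gen (\<lambda>j p. AW_phi_mat q mu u v H p (dist_idx q mu k j)) (MM * n) (mu k * n) (dist_idx q mu k) (e k 0)"
proof
  show "e k 0 * e k 0 = e k 0" using e_idem[OF k mu_pos[OF k]] .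
  show "e k 0 \<notin> JJ" using E_notJ[OF k] .
  show "inj_on (dist_idx q mu k) {..<mu k * n}" using dist_inj[OF k] .
  show "\<And>i. i < mu k * n \<Longrightarrow> dist_idx q mu k i < MM * n" using dist_lt[OF k] .
  show "\<And>j p. AW_phi_mat q mu u v H p (dist_idx q mu k j) * e k 0 = AW_phi_mat q mu u v H p (dist_idx q mu k j)"
    using phimat_col[OF k] .
  show "\<And>j i. i < mu k * n \<Longrightarrow> e k 0 * AW_phi_mat q mu u v H (dist_idx q mu k i) (dist_idx q mu k j) = AW_phi_mat q mu u v H (dist_idx q mu k i) (dist_idx q mu k j)"
    using phimat_row[OF k] .
  show "\<And>y. y \<in> Cor (e k 0) \<Longrightarrow> y \<notin> JJ \<Longrightarrow> \<exists>y'\<in>Cor (e k 0). y * y' - e k 0 \<in> JJ \<and> y' * y - e k 0 \<in> JJ"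
    using inv_lemma[OF k] by blast
qed

end


lemma lin_surj_comp:
  assumes "lin_surj m n H1" "lin_surj n l H2"
  shows "lin_surj m l (mat_comp n H2 H1)"
  unfolding lin_surj_def
proof
  fix y :: "nat \<Rightarrow> 'a"
  obtain x2 where x2: "\<forall>c<l. (\<Sum>a<n. H2 c a * x2 a) = y c" using assms(2) unfolding lin_surj_def by blast
  obtain x1 where x1: "\<forall>a<n. (\<Sum>b<m. H1 a b * x1 b) = x2 a" using assms(1) unfolding lin_surj_def by blast
  have "(\<Sum>b<m. mat_comp n H2 H1 c b * x1 b) = y c" if c: "c < l" for c
  proof -
    have "(\<Sum>b<m. mat_comp n H2 H1 c b * x1 b) = (\<Sum>b<m. \<Sum>a<n. H2 c a * (H1 a b * x1 b))"
      by (simp add: mat_comp_def sum_distrib_right mult.assoc)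
    also have "\<dots> = (\<Sum>a<n. H2 c a * (\<Sum>b<m. H1 a b * x1 b))"
      by (simp add: sum_distrib_left) (rule sum.swap)
    also have "\<dots> = (\<Sum>a<n. H2 c a * x2 a)" using x1 by simp
    finally show ?thesis using x2 c by simp
  qed
  then show "\<exists>x. \<forall>a<l. (\<Sum>b<m. mat_comp n H2 H1 a b * x b) = y a" by blast
qed

context aw
begin

abbreviation colH :: "(nat \<Rightarrow> nat \<Rightarrow> 'a) \<Rightarrow> nat \<Rightarrow> nat \<Rightarrow> nat \<Rightarrow> 'a" where
  "colH H k \<equiv> (\<lambda>j p. AW_phi_mat q mu u v H p (dist_idx q mu k j))"

lemma frakS_eq: "frakS q mu e u v m n H k S =
  genfrak (colH H k) (mu k * m) (MM * n) (mu k * n) (dist_idx q mu k) (e k 0) S"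
  by (simp add: frakS_def genfrak_def is_basis_set_def bset_def corner_Cor lexordp_conv_lexord)

lemma comp_k:
  assumes k: "k < q"
    and F1: "frakS q mu e u v m n H1 k S1"
    and X1: "\<forall>i<mu k * n. \<forall>p<MM * n. colH H1 k (sorted_list_of_set S1 ! i) p = (if p = dist_idx q mu k i then e k 0 else 0)"
    and F2: "frakS q mu e u v n l H2 k S2"
    and X2: "\<forall>i<mu k * l. \<forall>p<MM * l. colH H2 k (sorted_list_of_set S2 ! i) p = (if p = dist_idx q mu k i then e k 0 else 0)"
  shows "\<exists>S. frakS q mu e u v m l (mat_comp n H2 H1) k S \<and>
    (\<forall>i<mu k * l. \<forall>p<MM * l. colH (mat_comp n H2 H1) k (sorted_list_of_set S ! i) p
        = (if p = dist_idx q mu k i then e k 0 else 0))"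
proof -
  let ?G = "mat_comp n H2 H1"
  let ?di = "dist_idx q mu k"
  let ?E = "e k 0"
  let ?N1 = "mu k * n" and ?N2 = "mu k * l"
  interpret G1: gen "colH H1 k" "mu k * m" "MM * n" "mu k * n" ?di ?E by (rule gen_inst[OF k])
  interpret G2: gen "colH H2 k" "mu k * n" "MM * l" "mu k * l" ?di ?E by (rule gen_inst[OF k])
  interpret GG: gen "colH ?G k" "mu k * m" "MM * l" "mu k * l" ?di ?E by (rule gen_inst[OF k])
  define js1 where "js1 = sorted_list_of_set S1"
  define js2 where "js2 = sorted_list_of_set S2"
  have FR1: "genfrak (colH H1 k) (mu k * m) (MM * n) ?N1 ?di ?E S1" using F1 frakS_eq by blast
  have FR2: "genfrak (colH H2 k) (mu k * n) (MM * l) ?N2 ?di ?E S2" using F2 frakS_eq by blast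
  have ex1: "colH H1 k (js1 ! i) p = unitv ?di ?E i p" if "i < ?N1" "p < MM * n" for i p
    using X1 that by (simp add: unitv_def js1_def)
  have ex2: "colH H2 k (js2 ! i) p = unitv ?di ?E i p" if "i < ?N2" "p < MM * l" for i p
    using X2 that by (simp add: unitv_def js2_def)
  have len1: "length js1 = ?N1" unfolding js1_def by (rule G1.frak_length[OF FR1]) (use ex1 js1_def in auto)
  have len2: "length js2 = ?N2" unfolding js2_def by (rule G2.frak_length[OF FR2]) (use ex2 js2_def in auto)
  have B1: "bset (colH H1 k) (mu k * m) (MM * n) ?N1 ?di ?E S1" using FR1 by (simp add: genfrak_def)
  have B2: "bset (colH H2 k) (mu k * n) (MM * l) ?N2 ?di ?E S2" using FR2 by (simp add: genfrak_def)
  have fS1: "finite S1" and S1P: "S1 \<subseteq> {..<mu k * m}" using B1 unfolding bset_def using finite_subset by blast+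
  have fS2: "finite S2" and S2P: "S2 \<subseteq> {..<mu k * n}" using B2 unfolding bset_def using finite_subset by blast+
  note nf1 = G1.nth_facts[OF fS1, folded js1_def, unfolded len1]
  note nf2 = G2.nth_facts[OF fS2, folded js2_def, unfolded len2]
  have mono1le: "js1 ! a \<le> js1 ! b" if "a \<le> b" "b < ?N1" for a b using nf1(3)[of a b] that by (cases "a = b") auto
  have mono2le: "js2 ! a \<le> js2 ! b" if "a \<le> b" "b < ?N2" for a b using nf2(3)[of a b] that by (cases "a = b") auto
  have p1P: "js1 ! i < mu k * m" if "i < ?N1" for i using nf1(1) S1P that by auto
  have p2P: "js2 ! i < ?N1" if "i < ?N2" for i using nf2(1) S2P that by auto
  have rref1: "colH H1 k j p \<in> JJ" if "j < mu k * m" "j \<notin> S1" "t < ?N1" "j < js1 ! t" "p < MM * n" "p \<notin> ?di ` {..<t}" for j t p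
    using G1.frak_rref[OF FR1 _ _ that(1,2,3) _ that(5,6)] len1 ex1 that(4) by (simp add: js1_def)
  have rref2: "colH H2 k j p \<in> JJ" if "j < mu k * n" "j \<notin> S2" "t < ?N2" "j < js2 ! t" "p < MM * l" "p \<notin> ?di ` {..<t}" for j t p
    using G2.frak_rref[OF FR2 _ _ that(1,2,3) _ that(5,6)] len2 ex2 that(4) by (simp add: js2_def)
  have colG: "colH ?G k j p = (\<Sum>r<MM * n. AW_phi_mat q mu u v H2 p r * colH H1 k j r)" for j p
    using phimat_comp[OF k] by simp
  have colG1: "colH ?G k (js1 ! a) p = colH H2 k a p" if a: "a < ?N1" for a p
  proof -
    have "colH ?G k (js1 ! a) p = (\<Sum>r<MM * n. AW_phi_mat q mu u v H2 p r * (if r = ?di a then ?E else 0))"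
      unfolding colG using ex1[OF a] by (intro sum.cong refl) (simp add: unitv_def)
    also have "\<dots> = AW_phi_mat q mu u v H2 p (?di a) * ?E"
      using dist_lt[OF k a] by (simp add: if_distrib sum.delta cong: if_cong)
    also have "\<dots> = colH H2 k a p" using phimat_col[OF k] by simp
    finally show ?thesis .
  qed
  define \<pi> where "\<pi> i = js1 ! (js2 ! i)" for i
  have monoG: "\<pi> i < \<pi> i'" if "i < i'" "i' < ?N2" for i i'
    using nf1(3) nf2(3) that p2P unfolding \<pi>_def by simp
  have subG: "\<pi> i < mu k * m" if "i < ?N2" for i using p1P p2P that \<pi>_def by simp
  have exG: "colH ?G k (\<pi> i) p = unitv ?di ?E i p" if "i < ?N2" "p < MM * l" for i p
    using colG1[OF p2P[OF that(1)]] ex2[OF that] by (simp add: \<pi>_def)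
  have rrefG: "colH ?G k j p \<in> JJ" if j: "j < mu k * m" "j \<notin> \<pi> ` {..<?N2}" and t: "t < ?N2" "j < \<pi> t"
     and p: "p < MM * l" "p \<notin> ?di ` {..<t}" for j t p
  proof (cases "j \<in> S1")
    case True
    then obtain a where a: "a < ?N1" "j = js1 ! a" using nf1(1) by auto
    have at: "a < js2 ! t"
    proof (rule ccontr)
      assume "\<not> a < js2 ! t"
      then have "js1 ! (js2 ! t) \<le> js1 ! a" using mono1le a(1) by simp
      then show False using t(2) a(2) \<pi>_def by simp
    qed
    have aS2: "a \<notin> S2"
    proof
      assume "a \<in> S2"
      then obtain i where "i < ?N2" "a = js2 ! i" using nf2(1) by auto
      then show False using j(2) a(2) \<pi>_def by auto
    qed
    have "colH H2 k a p \<in> JJ" using rref2[OF a(1) aS2 t(1) at p] .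
    then show ?thesis using colG1[OF a(1)] a(2) by simp
  next
    case False
    have t1: "js2 ! t < ?N1" using p2P t(1) .
    have r1: "colH H1 k j r \<in> JJ" if "r < MM * n" "r \<notin> ?di ` {..<js2 ! t}" for r
      using rref1[OF j(1) False t1 _ that] t(2) \<pi>_def by simp
    have "AW_phi_mat q mu u v H2 p r * colH H1 k j r \<in> JJ" if r: "r < MM * n" for r
    proof (cases "r \<in> ?di ` {..<js2 ! t}")
      case True
      then obtain a where a: "a < js2 ! t" "r = ?di a" by auto
      have aN: "a < ?N1" using a(1) t1 by simp
      show ?thesis
      proof (cases "a \<in> S2")
        case True
        then obtain i where i: "i < ?N2" "a = js2 ! i" using nf2(1) by auto
        have "i < t"
        proof (rule ccontr)
          assume "\<not> i < t"
          then have "js2 ! t \<le> js2 ! i" using mono2le i(1) by simp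
          then show False using a(1) i(2) by simp
        qed
        then have "p \<noteq> ?di i" using p(2) by auto
        then have "colH H2 k a p = 0" using ex2[OF i(1) p(1)] i(2) by (simp add: unitv_def)
        then show ?thesis using a(2) by (simp add: J_0)
      next
        case False
        have "colH H2 k a p \<in> JJ" using rref2[OF aN False t(1) a(1) p] .
        then show ?thesis using a(2) by (simp add: J_mult_right)
      qed
    next
      case False
      show ?thesis by (rule J_mult_left) (rule r1[OF r False])
    qed
    then show ?thesis unfolding colG by (intro J_sum) auto
  qed
  have RF: "sorted_list_of_set (\<pi> ` {..<?N2}) = map \<pi> [0..<?N2]"
    and FRG: "genfrak (colH ?G k) (mu k * m) (MM * l) ?N2 ?di ?E (\<pi> ` {..<?N2})"
    using GG.rref_frak[of \<pi>, OF monoG subG exG rrefG] by auto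
  show ?thesis
  proof (intro exI conjI)
    show "frakS q mu e u v m l ?G k (\<pi> ` {..<?N2})" using FRG frakS_eq by blast
    show "\<forall>i<mu k * l. \<forall>p<MM * l. colH ?G k (sorted_list_of_set (\<pi> ` {..<?N2}) ! i) p =
        (if p = ?di i then ?E else 0)"
      using exG by (simp add: RF unitv_def)
  qed
qed

end

theorem lemma4p3:
  fixes e u v :: "nat \<Rightarrow> nat \<Rightarrow> 'a::ring_1" and mu :: "nat \<Rightarrow> nat" and q :: nat
    and H1 H2 :: "nat \<Rightarrow> nat \<Rightarrow> 'a" and m n l :: nat
  assumes "right_artinian TYPE('a)"
    and "AW_setup q mu e u v"
    and "column_adapted q mu e u v m n H1"
    and "column_adapted q mu e u v n l H2"
  shows "column_adapted q mu e u v m l (mat_comp n H2 H1)"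
proof -
  interpret aw q mu e u v by (rule aw.intro) (rule assms(2))
  have ls: "lin_surj m l (mat_comp n H2 H1)"
    using assms(3,4) lin_surj_comp unfolding column_adapted_def by blast
  have "\<exists>S. frakS q mu e u v m l (mat_comp n H2 H1) k S \<and>
        (let js = sorted_list_of_set S in
          (\<forall>i<mu k * l. \<forall>p<mu_total q mu * l.
             AW_phi_mat q mu u v (mat_comp n H2 H1) p (dist_idx q mu k (js ! i))
             - (if p = dist_idx q mu k i then e k 0 else 0) \<in> jacobson_radical) \<and>
          (\<forall>i<mu k * l. \<forall>p<mu_total q mu * l.
             AW_phi_mat q mu u v (mat_comp n H2 H1) p (dist_idx q mu k (js ! i))
             = (if p = dist_idx q mu k i then e k 0 else 0)))" if k: "k < q" for k
  proof -
    obtain S1 where S1: "frakS q mu e u v m n H1 k S1"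
      "\<forall>i<mu k * n. \<forall>p<MM * n. colH H1 k (sorted_list_of_set S1 ! i) p = (if p = dist_idx q mu k i then e k 0 else 0)"
      using assms(3) k unfolding column_adapted_def Let_def by blast
    obtain S2 where S2: "frakS q mu e u v n l H2 k S2"
      "\<forall>i<mu k * l. \<forall>p<MM * l. colH H2 k (sorted_list_of_set S2 ! i) p = (if p = dist_idx q mu k i then e k 0 else 0)"
      using assms(4) k unfolding column_adapted_def Let_def by blast
    obtain S where S: "frakS q mu e u v m l (mat_comp n H2 H1) k S"
      "\<forall>i<mu k * l. \<forall>p<MM * l. colH (mat_comp n H2 H1) k (sorted_list_of_set S ! i) p
        = (if p = dist_idx q mu k i then e k 0 else 0)"
      using comp_k[OF k S1 S2] by blast
    show ?thesis unfolding Let_def using S J_0 by (intro exI[of _ S]) auto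
  qed
  then show ?thesis unfolding column_adapted_def using ls by blast
qed

end
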